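(* Every random context language can be generated by a limited random context grammar (without erasing productions).
   Context: For an alphabet $V$, $V^+=V^*-\{\lambda\}$, and $\mathit{alph}(w)$ is the set of symbols occurring in $w$. A random context grammar is a quadruple $G=(N,T,P,S)$ where $N$ and $T$ are disjoint finite alphabets of nonterminals and terminals, $V=N\cup T$, $S\in N$, and $P$ is a finite set of productions $(A\to x,\mathit{Per},\mathit{For})$ with $A\in N$, $x\in V^+$ (no erasing productions), $\mathit{Per},\mathit{For}\subseteq N$. For $u,v\in V^*$, $uAv\Rightarrow uxv$ holds if $\mathit{Per}\subseteq\mathit{alph}(uv)$ and $\mathit{alph}(uv)\cap\mathit{For}=\emptyset$. $L(G)=\{w\in T^*:S\Rightarrow^*w\}$. A random context language is a language generated by some random context grammar. A random context grammar is production-limited if every production has one of the forms $(A\to BC,\mathit{Per},\mathit{For})$, $(A\to B,\mathit{Per},\mathit{For})$, or $(A\to a,\emptyset,\emptyset)$, where $A,B,C\in N$, $a\in T$, $\mathit{Per},\mathit{For}\subseteq N$. It is limited if it is production-limited and, in addition, every set $\mathit{Per}$ and $\mathit{For}$ occurring in its productions is either empty or a one-element set. *)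

theory Defs
  imports Main
begin

text \<open>Symbols: Inl A is the nonterminal A, Inr a is the terminal a
  (so N and T are disjoint by construction).\<close>
type_synonym ('n,'t) sym = "'n + 't"

text \<open>A production (A -> x, Per, For).\<close>
type_synonym ('n,'t) prod = "'n \<times> ('n,'t) sym list \<times> 'n set \<times> 'n set"

type_synonym ('n,'t) rcg = "'n set \<times> 't set \<times> ('n,'t) prod set \<times> 'n"

definition nts_of :: "('n,'t) rcg \<Rightarrow> 'n set" where "nts_of G = fst G"
definition tms_of :: "('n,'t) rcg \<Rightarrow> 't set" where "tms_of G = fst (snd G)"
definition prods_of :: "('n,'t) rcg \<Rightarrow> ('n,'t) prod set" where "prods_of G = fst (snd (snd G))"
definition start_of :: "('n,'t) rcg \<Rightarrow> 'n" where "start_of G = snd (snd (snd G))"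

definition syms_of :: "('n,'t) rcg \<Rightarrow> ('n,'t) sym set" where
  "syms_of G = Inl ` nts_of G \<union> Inr ` tms_of G"

definition random_context_grammar :: "('n,'t) rcg \<Rightarrow> bool" where
  "random_context_grammar G \<longleftrightarrow>
     finite (nts_of G) \<and> finite (tms_of G) \<and> finite (prods_of G) \<and>
     start_of G \<in> nts_of G \<and>
     (\<forall>(A, x, Per, For) \<in> prods_of G.
        A \<in> nts_of G \<and> x \<noteq> [] \<and> set x \<subseteq> syms_of G \<and>
        Per \<subseteq> nts_of G \<and> For \<subseteq> nts_of G)"

text \<open>Nonterminals occurring in a word (alph(w) restricted to N; Per and For are sets of
  nonterminals, so this is equivalent to using alph).\<close>
definition alph_N :: "('n,'t) sym list \<Rightarrow> 'n set" where
  "alph_N w = {A. Inl A \<in> set w}"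

definition derive_step :: "('n,'t) rcg \<Rightarrow> ('n,'t) sym list \<Rightarrow> ('n,'t) sym list \<Rightarrow> bool" where
  "derive_step G w w' \<longleftrightarrow>
     (\<exists>u v A x Per For. (A, x, Per, For) \<in> prods_of G \<and>
        w = u @ [Inl A] @ v \<and> w' = u @ x @ v \<and>
        Per \<subseteq> alph_N (u @ v) \<and> alph_N (u @ v) \<inter> For = {})"

definition Lang :: "('n,'t) rcg \<Rightarrow> 't list set" where
  "Lang G = {w. set w \<subseteq> tms_of G \<and> (derive_step G)\<^sup>*\<^sup>* [Inl (start_of G)] (map Inr w)}"

definition production_limited :: "('n,'t) rcg \<Rightarrow> bool" where
  "production_limited G \<longleftrightarrow>
     (\<forall>(A, x, Per, For) \<in> prods_of G.
        (\<exists>B C. x = [Inl B, Inl C]) \<or> (\<exists>B. x = [Inl B]) \<or>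
        (\<exists>a. x = [Inr a] \<and> Per = {} \<and> For = {}))"

definition limited :: "('n,'t) rcg \<Rightarrow> bool" where
  "limited G \<longleftrightarrow> production_limited G \<and>
     (\<forall>(A, x, Per, For) \<in> prods_of G.
        (Per = {} \<or> (\<exists>X. Per = {X})) \<and> (For = {} \<or> (\<exists>X. For = {X})))"

end

theory Submission
  imports Defs
begin


lemma alph_N_append[simp]: "alph_N (u @ v) = alph_N u \<union> alph_N v"
  by (auto simp: alph_N_def)
lemma alph_N_Nil[simp]: "alph_N [] = {}" by (simp add: alph_N_def)
lemma alph_N_Cons_Inl[simp]: "alph_N (Inl A # w) = insert A (alph_N w)" by (auto simp: alph_N_def)
lemma alph_N_Cons_Inr[simp]: "alph_N (Inr a # w) = alph_N w" by (auto simp: alph_N_def)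
lemma finite_alph_N[simp]: "finite (alph_N w)"
proof (induction w)
  case (Cons a w) then show ?case by (cases a) auto
qed simp
  
lemma derive_stepI:
  "(A, x, Pe, Fo) \<in> prods_of G \<Longrightarrow> Pe \<subseteq> alph_N (u @ v) \<Longrightarrow> alph_N (u @ v) \<inter> Fo = {}
   \<Longrightarrow> derive_step G (u @ [Inl A] @ v) (u @ x @ v)"
  unfolding derive_step_def by blast

definition ren :: "('a \<Rightarrow> 'b) \<Rightarrow> ('a,'t) rcg \<Rightarrow> ('b,'t) rcg" where
  "ren f G = (f ` nts_of G, tms_of G,
     (\<lambda>(A,x,Pe,Fo). (f A, map (map_sum f id) x, f ` Pe, f ` Fo)) ` prods_of G, f (start_of G))"

lemma ren_simps[simp]:
  "nts_of (ren f G) = f ` nts_of G" "tms_of (ren f G) = tms_of G"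
  "prods_of (ren f G) = (\<lambda>(A,x,Pe,Fo). (f A, map (map_sum f id) x, f ` Pe, f ` Fo)) ` prods_of G"
  "start_of (ren f G) = f (start_of G)"
  by (simp_all add: ren_def nts_of_def tms_of_def prods_of_def start_of_def)

lemma alph_N_map[simp]: "alph_N (map (map_sum f id) w) = f ` alph_N w"
proof (induction w)
  case (Cons a w) then show ?case by (cases a) auto
qed simp

lemma syms_of_ren: "syms_of (ren f G) = map_sum f id ` syms_of G"
  unfolding syms_of_def by (simp add: image_Un image_image)

lemma ren_rcg:
  assumes "random_context_grammar G"
  shows "random_context_grammar (ren f G)"
proof -
  have pr: "A \<in> nts_of G \<and> x \<noteq> [] \<and> set x \<subseteq> syms_of G \<and> Pe \<subseteq> nts_of G \<and> Fo \<subseteq> nts_of G"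
    if "(A,x,Pe,Fo) \<in> prods_of G" for A x Pe Fo
  proof -
    have "\<forall>(A, x, Per, For) \<in> prods_of G.
        A \<in> nts_of G \<and> x \<noteq> [] \<and> set x \<subseteq> syms_of G \<and>
        Per \<subseteq> nts_of G \<and> For \<subseteq> nts_of G" using assms unfolding random_context_grammar_def by (elim conjE)
    from bspec[OF this that] show ?thesis by simp
  qed
  have b: "\<forall>(A, x, Per, For)\<in>prods_of (ren f G).
        A \<in> nts_of (ren f G) \<and> x \<noteq> [] \<and> set x \<subseteq> syms_of (ren f G) \<and>
        Per \<subseteq> nts_of (ren f G) \<and> For \<subseteq> nts_of (ren f G)"
  proof (rule ballI)
    fix \<pi> assume "\<pi> \<in> prods_of (ren f G)"
    then obtain q where q: "q \<in> prods_of G" "\<pi> = (\<lambda>(A,x,Pe,Fo). (f A, map (map_sum f id) x, f ` Pe, f ` Fo)) q"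
      by (auto simp del: split_paired_all)
    obtain A x Pe Fo where "q = (A,x,Pe,Fo)" by (cases q)
    then have p: "(A,x,Pe,Fo) \<in> prods_of G"
       and e: "\<pi> = (f A, map (map_sum f id) x, f ` Pe, f ` Fo)" using q by auto
    from pr[OF p] have h: "A \<in> nts_of G" "x \<noteq> []" "set x \<subseteq> syms_of G" "Pe \<subseteq> nts_of G" "Fo \<subseteq> nts_of G"
      by auto
    have "set (map (map_sum f id) x) \<subseteq> syms_of (ren f G)"
      unfolding syms_of_ren set_map using h(3) by (rule image_mono)
    then show "case \<pi> of (A, x, Per, For) \<Rightarrow>
        A \<in> nts_of (ren f G) \<and> x \<noteq> [] \<and> set x \<subseteq> syms_of (ren f G) \<and>
        Per \<subseteq> nts_of (ren f G) \<and> For \<subseteq> nts_of (ren f G)"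
      unfolding e using h by auto
  qed
  show ?thesis using assms b unfolding random_context_grammar_def by simp
qed

lemma ren_limited:
  assumes "limited G" shows "limited (ren f G)"
proof -
  have pr: "((\<exists>B C. x = [Inl B, Inl C]) \<or> (\<exists>B. x = [Inl B]) \<or>
        (\<exists>a. x = [Inr a] \<and> Pe = {} \<and> Fo = {})) \<and>
        (Pe = {} \<or> (\<exists>X. Pe = {X})) \<and> (Fo = {} \<or> (\<exists>X. Fo = {X}))"
    if "(A,x,Pe,Fo) \<in> prods_of G" for A x Pe Fo
  proof -
    have "\<forall>(A, x, Per, For) \<in> prods_of G. ((\<exists>B C. x = [Inl B, Inl C]) \<or> (\<exists>B. x = [Inl B]) \<or>
        (\<exists>a. x = [Inr a] \<and> Per = {} \<and> For = {})) \<and>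
        (Per = {} \<or> (\<exists>X. Per = {X})) \<and> (For = {} \<or> (\<exists>X. For = {X}))"
      using assms unfolding limited_def production_limited_def by (auto simp del: split_paired_all)
    from bspec[OF this that] show ?thesis by simp
  qed
  show ?thesis unfolding limited_def production_limited_def
    by (auto dest!: pr)
qed

lemma derive_syms:
  assumes "random_context_grammar G" "derive_step G w w'" "set w \<subseteq> syms_of G"
  shows "set w' \<subseteq> syms_of G"
proof -
  from assms(2) obtain u v A x Pe Fo where p: "(A, x, Pe, Fo) \<in> prods_of G" and
    w: "w = u @ [Inl A] @ v" and w': "w' = u @ x @ v" unfolding derive_step_def by blast
  have "set x \<subseteq> syms_of G" using p assms(1) unfolding random_context_grammar_def by blast
  then show ?thesis using assms(3) w w' by auto
qed

lemma derives_syms: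
  assumes "random_context_grammar G" "(derive_step G)\<^sup>*\<^sup>* w w'" "set w \<subseteq> syms_of G"
  shows "set w' \<subseteq> syms_of G"
  using assms(2,3) by induction (auto dest: derive_syms[OF assms(1)])

lemma ren_step1:
  assumes G: "random_context_grammar G" and inj: "inj_on f (nts_of G)"
    and st: "derive_step G w w'" and ws: "set w \<subseteq> syms_of G"
  shows "derive_step (ren f G) (map (map_sum f id) w) (map (map_sum f id) w')"
proof -
  from st obtain u v A x Pe Fo where p: "(A, x, Pe, Fo) \<in> prods_of G" and
    w: "w = u @ [Inl A] @ v" and w': "w' = u @ x @ v" and
    c1: "Pe \<subseteq> alph_N (u @ v)" and c2: "alph_N (u @ v) \<inter> Fo = {}"
    unfolding derive_step_def by blast
  have sub: "alph_N (u@v) \<subseteq> nts_of G" using ws w by (auto simp: alph_N_def syms_of_def)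
  have sub2: "Fo \<subseteq> nts_of G" using p G unfolding random_context_grammar_def by auto
  have "f ` alph_N (u@v) \<inter> f ` Fo = {}"
  proof (rule ccontr)
    assume "f ` alph_N (u@v) \<inter> f ` Fo \<noteq> {}"
    then obtain a b where ab: "a \<in> alph_N (u@v)" "b \<in> Fo" "f a = f b" by blast
    then have "a = b" using inj sub sub2 unfolding inj_on_def by blast
    then show False using ab c2 by blast
  qed
  moreover have "(f A, map (map_sum f id) x, f ` Pe, f ` Fo) \<in> prods_of (ren f G)"
    using p by force
  moreover have "f ` Pe \<subseteq> alph_N (map (map_sum f id) u @ map (map_sum f id) v)"
    using c1 by (metis alph_N_map map_append image_mono)
  ultimately have "derive_step (ren f G) (map (map_sum f id) u @ [Inl (f A)] @ map (map_sum f id) v)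
      (map (map_sum f id) u @ map (map_sum f id) x @ map (map_sum f id) v)"
    by (intro derive_stepI) (auto simp del: map_append simp: map_append[symmetric])
  then show ?thesis by (simp add: w w')
qed

lemma ren_step2:
  assumes G: "random_context_grammar G" and inj: "inj_on f (nts_of G)"
    and st: "derive_step (ren f G) (map (map_sum f id) w) z" and ws: "set w \<subseteq> syms_of G"
  shows "\<exists>w'. z = map (map_sum f id) w' \<and> derive_step G w w'"
proof -
  from st obtain u' v' A' x' Pe' Fo' where p: "(A', x', Pe', Fo') \<in> prods_of (ren f G)" and
    w: "map (map_sum f id) w = u' @ [Inl A'] @ v'" and z: "z = u' @ x' @ v'" and
    c1: "Pe' \<subseteq> alph_N (u' @ v')" and c2: "alph_N (u' @ v') \<inter> Fo' = {}"
    unfolding derive_step_def by blast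
  from p obtain q where q: "q \<in> prods_of G" "(A', x', Pe', Fo') = (\<lambda>(A,x,Pe,Fo). (f A, map (map_sum f id) x, f ` Pe, f ` Fo)) q"
    by (auto simp del: split_paired_all)
  obtain A x Pe Fo where "q = (A,x,Pe,Fo)" by (cases q)
  then have p0: "(A,x,Pe,Fo) \<in> prods_of G" and
    e: "A' = f A" "x' = map (map_sum f id) x" "Pe' = f ` Pe" "Fo' = f ` Fo" using q by auto
  have "\<exists>us vs. w = us @ vs \<and> u' = map (map_sum f id) us \<and> [Inl A'] @ v' = map (map_sum f id) vs"
    using w by (simp only: map_eq_append_conv)
  then obtain u r where ur: "w = u @ r" "map (map_sum f id) u = u'" "map (map_sum f id) r = [Inl A'] @ v'"
    by (elim exE conjE) simp
  have "\<exists>c v. r = c # v \<and> map_sum f id c = Inl A' \<and> map (map_sum f id) v = v'"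
    using ur(3) by (simp only: append_Cons append_Nil map_eq_Cons_conv)
  then obtain c v where cv: "r = c # v" "map_sum f id c = Inl A'" "map (map_sum f id) v = v'"
    by (elim exE conjE)
  have wu: "w = u @ c # v" "map (map_sum f id) u = u'"
     "map_sum f id c = Inl A'" "map (map_sum f id) v = v'" using ur cv by auto
  from wu(3) obtain A0 where c: "c = Inl A0" "f A0 = A'" by (cases c) auto
  have A0: "A0 \<in> nts_of G" using ws wu c by (auto simp: syms_of_def)
  have Ain: "A \<in> nts_of G" "Pe \<subseteq> nts_of G" "Fo \<subseteq> nts_of G"
    using p0 G unfolding random_context_grammar_def by auto
  have "A0 = A" using inj A0 Ain c e by (auto simp: inj_on_def)
  have sub: "alph_N (u@v) \<subseteq> nts_of G" using ws wu by (auto simp: alph_N_def syms_of_def)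
  have "Pe \<subseteq> alph_N (u @ v)"
  proof
    fix B assume "B \<in> Pe"
    then have "f B \<in> f ` Pe" by blast
    moreover have a: "alph_N (u'@v') = f ` alph_N (u@v)"
      unfolding wu(2)[symmetric] wu(4)[symmetric] by (simp add: image_Un)
    ultimately have "f B \<in> f ` alph_N (u@v)" using c1 unfolding e(3) a by blast
    then obtain y where y: "y \<in> alph_N (u@v)" "f B = f y" by blast
    have "B \<in> nts_of G" "y \<in> nts_of G" using Ain \<open>B \<in> Pe\<close> sub y by blast+
    then have "B = y" using inj y(2) unfolding inj_on_def by blast
    then show "B \<in> alph_N (u@v)" using y by simp
  qed
  moreover have "alph_N (u @ v) \<inter> Fo = {}"
  proof -
    have a: "alph_N (u'@v') = f ` alph_N (u@v)"
      unfolding wu(2)[symmetric] wu(4)[symmetric] by (simp add: image_Un)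
    show ?thesis using c2 unfolding a e(4) by blast
  qed
  ultimately have "derive_step G w (u @ x @ v)"
    using derive_stepI[OF p0] wu c \<open>A0 = A\<close> by auto
  moreover have "z = map (map_sum f id) (u @ x @ v)" using z e wu by simp
  ultimately show ?thesis by blast
qed

lemma ren_Lang:
  fixes G :: "('a,'t) rcg" and f :: "'a \<Rightarrow> 'b"
  assumes G: "random_context_grammar G" and inj: "inj_on f (nts_of G)"
  shows "Lang (ren f G) = Lang G"
proof -
  have S: "set [Inl (start_of G)] \<subseteq> syms_of G" using G
    by (auto simp: random_context_grammar_def syms_of_def)
  have A: "(derive_step (ren f G))\<^sup>*\<^sup>* (map (map_sum f id) w) (map (map_sum f id) w')"
    if "(derive_step G)\<^sup>*\<^sup>* w w'" "set w \<subseteq> syms_of G" for w w'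
    using that
  proof induction
    case base then show ?case by simp
  next
    case (step y z)
    then have "set y \<subseteq> syms_of G" using derives_syms[OF G] by blast
    then show ?case using step ren_step1[OF G inj] by (meson rtranclp.rtrancl_into_rtrancl)
  qed
  have B: "\<exists>w'. z = map (map_sum f id) w' \<and> (derive_step G)\<^sup>*\<^sup>* w w'"
    if "(derive_step (ren f G))\<^sup>*\<^sup>* (map (map_sum f id) w) z" "set w \<subseteq> syms_of G" for w z
    using that(1)
  proof induction
    case base then show ?case by blast
  next
    case (step y z)
    then obtain w' where "y = map (map_sum f id) w'" "(derive_step G)\<^sup>*\<^sup>* w w'" by blast
    moreover have "set w' \<subseteq> syms_of G" using derives_syms[OF G] calculation that(2) by blast
    ultimately show ?case using step ren_step2[OF G inj]
      by (meson rtranclp.rtrancl_into_rtrancl)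
  qed
  have mi: "map (map_sum f id) (map Inr t) = map Inr t" for t :: "'t list" by simp
  have mi2: "map (map_sum f id) w' = map Inr t \<Longrightarrow> w' = map Inr t" for w' :: "('a+'t) list" and t :: "'t list"
  proof (induction w' arbitrary: t)
    case (Cons a w') then show ?case by (cases a; cases t) auto
  qed simp
  show ?thesis
    unfolding Lang_def
  proof (intro set_eqI iffI; clarsimp)
    fix t assume "set t \<subseteq> tms_of G" "(derive_step (ren f G))\<^sup>*\<^sup>* [Inl (f (start_of G))] (map Inr t)"
    then obtain w' where "map Inr t = map (map_sum f id) w'" "(derive_step G)\<^sup>*\<^sup>* [Inl (start_of G)] w'"
      using B[of "[Inl (start_of G)]" "map Inr t"] S by auto
    then show "(derive_step G)\<^sup>*\<^sup>* [Inl (start_of G)] (map Inr t)"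
      using mi2[of w' t] by simp
  next
    fix t assume "set t \<subseteq> tms_of G" "(derive_step G)\<^sup>*\<^sup>* [Inl (start_of G)] (map Inr t)"
    then show "(derive_step (ren f G))\<^sup>*\<^sup>* [Inl (f (start_of G))] (map Inr t)"
      using A[of "[Inl (start_of G)]" "map Inr t"] S by (simp add: o_def)
  qed
qed



datatype ('n,'t) K = Pl "('n,'t) sym" | Hd "('n,'t) sym" | Gv "('n,'t) sym" "('n,'t) sym"
  | Gt "('n,'t) sym" "('n,'t) sym" | Ck "('n,'t) prod" "'n set" "'n set" | Sp "('n,'t) prod" nat

definition rhs :: "('n,'t) prod \<Rightarrow> ('n,'t) sym list" where "rhs p = fst (snd p)"
definition per :: "('n,'t) prod \<Rightarrow> 'n set" where "per p = fst (snd (snd p))"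
definition forb :: "('n,'t) prod \<Rightarrow> 'n set" where "forb p = snd (snd (snd p))"
lemma prod_sel[simp]: "rhs (A,x,Pe,Fo) = x" "per (A,x,Pe,Fo) = Pe" "forb (A,x,Pe,Fo) = Fo"
  by (simp_all add: rhs_def per_def forb_def)

inductive_set PK :: "('n,'t) rcg \<Rightarrow> (('n,'t) K, 't) prod set" for G where
  give: "X \<in> syms_of G \<Longrightarrow> Y \<in> syms_of G \<Longrightarrow> (Hd X, [Inl (Gv X Y)], {}, {}) \<in> PK G"
| take: "X \<in> syms_of G \<Longrightarrow> Y \<in> syms_of G \<Longrightarrow> (Pl Y, [Inl (Gt Y X)], {Gv X Y}, {Gt Y X}) \<in> PK G"
| rel: "X \<in> syms_of G \<Longrightarrow> Y \<in> syms_of G \<Longrightarrow> (Gv X Y, [Inl (Pl X)], {Gt Y X}, {}) \<in> PK G"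
| acq: "X \<in> syms_of G \<Longrightarrow> Y \<in> syms_of G \<Longrightarrow> (Gt Y X, [Inl (Hd Y)], {}, {Gv X Y}) \<in> PK G"
| start: "p \<in> prods_of G \<Longrightarrow> (Hd (Inl (fst p)), [Inl (Ck p (per p) (forb p))], {}, {}) \<in> PK G"
| pchk: "p \<in> prods_of G \<Longrightarrow> P' \<subseteq> per p \<Longrightarrow> F' \<subseteq> forb p \<Longrightarrow> B \<in> P' \<Longrightarrow>
     (Ck p P' F', [Inl (Ck p (P' - {B}) F')], {Pl (Inl B)}, {}) \<in> PK G"
| fchk: "p \<in> prods_of G \<Longrightarrow> P' \<subseteq> per p \<Longrightarrow> F' \<subseteq> forb p \<Longrightarrow> C \<in> F' \<Longrightarrow>
     (Ck p P' F', [Inl (Ck p P' (F' - {C}))], {}, {Pl (Inl C)}) \<in> PK G"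
| go: "p \<in> prods_of G \<Longrightarrow> (Ck p {} {}, [Inl (Sp p 0)], {}, {}) \<in> PK G"
| split: "p \<in> prods_of G \<Longrightarrow> Suc i < length (rhs p) \<Longrightarrow>
     (Sp p i, [Inl (Pl (rhs p ! i)), Inl (Sp p (Suc i))], {}, {}) \<in> PK G"
| last: "p \<in> prods_of G \<Longrightarrow> Suc i = length (rhs p) \<Longrightarrow>
     (Sp p i, [Inl (Hd (rhs p ! i))], {}, {}) \<in> PK G"
| ht: "a \<in> tms_of G \<Longrightarrow> (Hd (Inr a), [Inr a], {}, {}) \<in> PK G"
| pt: "a \<in> tms_of G \<Longrightarrow> (Pl (Inr a), [Inr a], {}, {}) \<in> PK G"

definition PKsup :: "('n,'t) rcg \<Rightarrow> (('n,'t) K, 't) prod set" where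
  "PKsup G = (let V = syms_of G; P = prods_of G; T = tms_of G in
     (\<Union>X\<in>V. \<Union>Y\<in>V. {(Hd X, [Inl (Gv X Y)], {}, {}), (Pl Y, [Inl (Gt Y X)], {Gv X Y}, {Gt Y X}),
        (Gv X Y, [Inl (Pl X)], {Gt Y X}, {}), (Gt Y X, [Inl (Hd Y)], {}, {Gv X Y})})
   \<union> (\<Union>p\<in>P. {(Hd (Inl (fst p)), [Inl (Ck p (per p) (forb p))], {}, {}), (Ck p {} {}, [Inl (Sp p 0)], {}, {})})
   \<union> (\<Union>p\<in>P. \<Union>P'\<in>Pow (per p). \<Union>F'\<in>Pow (forb p). \<Union>B\<in>P'. {(Ck p P' F', [Inl (Ck p (P' - {B}) F')], {Pl (Inl B)}, {})})
   \<union> (\<Union>p\<in>P. \<Union>P'\<in>Pow (per p). \<Union>F'\<in>Pow (forb p). \<Union>C\<in>F'. {(Ck p P' F', [Inl (Ck p P' (F' - {C}))], {}, {Pl (Inl C)})})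
   \<union> (\<Union>p\<in>P. \<Union>i\<in>{..<length (rhs p)}. {(Sp p i, [Inl (Pl (rhs p ! i)), Inl (Sp p (Suc i))], {}, {}),
        (Sp p i, [Inl (Hd (rhs p ! i))], {}, {})})
   \<union> (\<Union>a\<in>T. {(Hd (Inr a), [Inr a], {}, {}), (Pl (Inr a), [Inr a], {}, {})}))"

lemma PK_sub1: "(A,x,Pe,Fo) \<in> PK G \<Longrightarrow> (A,x,Pe,Fo) \<in> PKsup G"
  unfolding PKsup_def Let_def
  by (erule PK.cases) (auto simp del: split_paired_all)

lemma PK_sub: "PK G \<subseteq> PKsup G"
  using PK_sub1 by fast

lemma rcg_prod:
  assumes "random_context_grammar G" "(A,x,Pe,Fo) \<in> prods_of G"
  shows "A \<in> nts_of G \<and> x \<noteq> [] \<and> set x \<subseteq> syms_of G \<and> Pe \<subseteq> nts_of G \<and> Fo \<subseteq> nts_of G"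
proof -
  have "\<forall>(A, x, Per, For) \<in> prods_of G.
      A \<in> nts_of G \<and> x \<noteq> [] \<and> set x \<subseteq> syms_of G \<and>
      Per \<subseteq> nts_of G \<and> For \<subseteq> nts_of G" using assms unfolding random_context_grammar_def by (elim conjE)
  from bspec[OF this assms(2)] show ?thesis by simp
qed

lemma rcg_prod':
  assumes "random_context_grammar G" "p \<in> prods_of G"
  shows "fst p \<in> nts_of G \<and> rhs p \<noteq> [] \<and> set (rhs p) \<subseteq> syms_of G \<and> per p \<subseteq> nts_of G \<and> forb p \<subseteq> nts_of G"
  using rcg_prod[OF assms(1), of "fst p" "rhs p" "per p" "forb p"] assms(2)
  by (cases p) simp

lemma finite_PK:
  assumes G: "random_context_grammar G"
  shows "finite (PK G)"
proof -
  have fV: "finite (syms_of G)" using G by (simp add: random_context_grammar_def syms_of_def)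
  have fP: "finite (prods_of G)" "finite (tms_of G)" using G by (simp_all add: random_context_grammar_def)
  have fN: "finite (nts_of G)" using G by (simp add: random_context_grammar_def)
  have fper: "finite (per p)" "finite (forb p)" if "p \<in> prods_of G" for p
    using rcg_prod'[OF G that] fN finite_subset by blast+
  have "finite (PKsup G)"
    unfolding PKsup_def Let_def
    using fV fP fper by (auto intro!: finite_UN_I intro: finite_subset)
  then show ?thesis using PK_sub finite_subset by blast
qed

definition ntsK :: "('n,'t) rcg \<Rightarrow> ('n,'t) K set" where
  "ntsK G = insert (Hd (Inl (start_of G)))
     (\<Union>\<pi>\<in>PK G. case \<pi> of (A,x,Pe,Fo) \<Rightarrow> insert A (alph_N x \<union> Pe \<union> Fo))"

definition GK :: "('n,'t) rcg \<Rightarrow> (('n,'t) K, 't) rcg" where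
  "GK G = (ntsK G, tms_of G, PK G, Hd (Inl (start_of G)))"

lemma GK_simps[simp]: "nts_of (GK G) = ntsK G" "tms_of (GK G) = tms_of G"
  "prods_of (GK G) = PK G" "start_of (GK G) = Hd (Inl (start_of G))"
  by (simp_all add: GK_def nts_of_def tms_of_def prods_of_def start_of_def)

lemma PK_props:
  assumes "(A,x,Pe,Fo) \<in> PK G"
  shows "x \<noteq> [] \<and> finite Pe \<and> finite Fo \<and> (\<forall>a. Inr a \<in> set x \<longrightarrow> a \<in> tms_of G) \<and>
    ((\<exists>B C. x = [Inl B, Inl C]) \<or> (\<exists>B. x = [Inl B]) \<or> (\<exists>a. x = [Inr a] \<and> Pe = {} \<and> Fo = {})) \<and>
    (Pe = {} \<or> (\<exists>X. Pe = {X})) \<and> (Fo = {} \<or> (\<exists>X. Fo = {X}))"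
  using assms by cases auto

lemma GK_rcg:
  assumes G: "random_context_grammar G"
  shows "random_context_grammar (GK G)"
proof -
  have fin: "finite (ntsK G)"
    unfolding ntsK_def using finite_PK[OF G]
    by (auto intro!: finite_UN_I dest: PK_props simp del: split_paired_all split: prod.splits)
  have b: "\<forall>(A, x, Per, For)\<in>prods_of (GK G).
        A \<in> nts_of (GK G) \<and> x \<noteq> [] \<and> set x \<subseteq> syms_of (GK G) \<and>
        Per \<subseteq> nts_of (GK G) \<and> For \<subseteq> nts_of (GK G)"
  proof (clarsimp simp del: split_paired_all)
    fix A x Pe Fo assume p: "(A,x,Pe,Fo) \<in> PK G"
    have sub: "insert A (alph_N x \<union> Pe \<union> Fo) \<subseteq> ntsK G"
      unfolding ntsK_def using p by force
    have "set x \<subseteq> syms_of (GK G)"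
    proof
      fix s assume s: "s \<in> set x"
      show "s \<in> syms_of (GK G)"
      proof (cases s)
        case (Inl k) then show ?thesis using s sub by (auto simp: syms_of_def alph_N_def)
      next
        case (Inr a) then show ?thesis using s PK_props[OF p] by (auto simp: syms_of_def)
      qed
    qed
    then show "A \<in> ntsK G \<and> x \<noteq> [] \<and> set x \<subseteq> syms_of (GK G) \<and> Pe \<subseteq> ntsK G \<and> Fo \<subseteq> ntsK G"
      using sub PK_props[OF p] by auto
  qed
  show ?thesis unfolding random_context_grammar_def
    using fin b finite_PK[OF G] G by (auto simp: random_context_grammar_def ntsK_def)
qed

lemma GK_limited: "limited (GK G)"
proof -
  have "\<forall>(A, x, Per, For)\<in>PK G. ((\<exists>B C. x = [Inl B, Inl C]) \<or> (\<exists>B. x = [Inl B]) \<or>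
        (\<exists>a. x = [Inr a] \<and> Per = {} \<and> For = {})) \<and>
        (Per = {} \<or> (\<exists>X. Per = {X})) \<and> (For = {} \<or> (\<exists>X. For = {X}))"
    using PK_props by fast
  then show ?thesis unfolding limited_def production_limited_def GK_simps
    by (simp add: ball_conj_distrib[symmetric] split_def)
qed



fun exK :: "('n,'t) K \<Rightarrow> ('n,'t) sym list" where
  "exK (Pl X) = [X]" | "exK (Hd X) = [X]" | "exK (Gv X Y) = [X]" | "exK (Gt Y X) = [Y]"
| "exK (Ck p P' F') = [Inl (fst p)]" | "exK (Sp p i) = drop i (rhs p)"

fun ex1 :: "(('n,'t) K, 't) sym \<Rightarrow> ('n,'t) sym list" where
  "ex1 (Inl k) = exK k" | "ex1 (Inr a) = [Inr a]"

definition Ex :: "(('n,'t) K, 't) sym list \<Rightarrow> ('n,'t) sym list" where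
  "Ex w = concat (map ex1 w)"

lemma Ex_simps[simp]: "Ex [] = []" "Ex (x # w) = ex1 x @ Ex w" "Ex (u @ v) = Ex u @ Ex v"
  by (simp_all add: Ex_def)

fun act :: "(('n,'t) K, 't) sym \<Rightarrow> bool" where
  "act (Inl (Pl X)) = False" | "act (Inr a) = False" | "act (Inl _) = True"

definition plN :: "(('n,'t) K, 't) sym list \<Rightarrow> 'n set" where
  "plN w = {B. Inl (Pl (Inl B)) \<in> set w}"

lemma plN_simps[simp]: "plN [] = {}" "plN (u @ v) = plN u \<union> plN v"
  "plN (Inl (Pl (Inl B)) # w) = insert B (plN w)" "plN (Inl (Pl (Inr a)) # w) = plN w" "plN (Inr a # w) = plN w"
  "plN (Inl (Hd X) # w) = plN w" "plN (Inl (Gv X Y) # w) = plN w" "plN (Inl (Gt X Y) # w) = plN w"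
  "plN (Inl (Ck p P' F') # w) = plN w" "plN (Inl (Sp p i) # w) = plN w"
  by (auto simp: plN_def)

definition conf :: "(('n,'t) K, 't) sym list \<Rightarrow> 'n set \<Rightarrow> bool" where
  "conf a pn \<longleftrightarrow> a = [] \<or> (\<exists>X. a = [Inl (Hd X)]) \<or> (\<exists>X Y. a = [Inl (Gv X Y)]) \<or>
     (\<exists>X Y. a = [Inl (Gv X Y), Inl (Gt Y X)]) \<or> (\<exists>X Y. a = [Inl (Gt Y X), Inl (Gv X Y)]) \<or>
     (\<exists>X Y. a = [Inl (Gt Y X)]) \<or>
     (\<exists>p P' F'. a = [Inl (Ck p P' F')] \<and> per p - P' \<subseteq> pn \<and> (forb p - F') \<inter> pn = {}) \<or>
     (\<exists>p i. a = [Inl (Sp p i)])"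

definition Inv :: "('n,'t) rcg \<Rightarrow> (('n,'t) K, 't) sym list \<Rightarrow> bool" where
  "Inv G w \<longleftrightarrow> (derive_step G)\<^sup>*\<^sup>* [Inl (start_of G)] (Ex w) \<and> conf (filter act w) (plN w)"

lemma alph_Ex: "filter act z = [] \<Longrightarrow> alph_N (Ex z) = plN z"
proof (induction z)
  case (Cons s z)
  show ?case
  proof (cases s)
    case (Inl k)
    then obtain X where k: "k = Pl X" using Cons.prems by (cases k) auto
    show ?thesis using Cons Inl k by (cases X) auto
  next
    case (Inr a) then show ?thesis using Cons by auto
  qed
qed simp

lemma app1: "(fu @ c # fv = [d]) = (fu = [] \<and> fv = [] \<and> c = d)" by (cases fu) auto
lemma app2: "(fu @ c # fv = [d1, d2]) = ((fu = [] \<and> c = d1 \<and> fv = [d2]) \<or> (fu = [d1] \<and> c = d2 \<and> fv = []))"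
  by (cases fu) (auto simp: app1)
lemma app1': "(fu @ fv = [d]) = ((fu = [d] \<and> fv = []) \<or> (fu = [] \<and> fv = [d]))"
  by (cases fu) auto

lemma mem_act: "act (Inl q) \<Longrightarrow> (q \<in> alph_N z) = (Inl q \<in> set (filter act z))"
  by (auto simp: alph_N_def)

lemma conf_Sp[simp]: "conf [Inl (Sp p i)] pn" unfolding conf_def by blast
lemma conf_Hd[simp]: "conf [Inl (Hd X)] pn" unfolding conf_def by blast
lemma conf_Nil[simp]: "conf [] pn" unfolding conf_def by blast

lemma L_take: "conf a pn \<Longrightarrow> Inl (Gv X Y) \<in> set a \<Longrightarrow> Inl (Gt Y X) \<notin> set a \<Longrightarrow> a = [Inl (Gv X Y)]"
  unfolding conf_def by auto
lemma L_rel: "conf (fu @ Inl (Gv X Y) # fv) pn \<Longrightarrow> Inl (Gt Y X) \<in> set (fu @ fv) \<Longrightarrow> fu @ fv = [Inl (Gt Y X)]"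
  unfolding conf_def by (auto simp: app1 app2)
lemma L_acq: "conf (fu @ Inl (Gt Y X) # fv) pn \<Longrightarrow> Inl (Gv X Y) \<notin> set (fu @ fv) \<Longrightarrow> fu = [] \<and> fv = []"
  unfolding conf_def by (auto simp: app1 app2)
lemma L_hd: "conf (fu @ Inl (Hd X) # fv) pn \<Longrightarrow> fu = [] \<and> fv = []"
  unfolding conf_def by (auto simp: app1 app2)
lemma L_sp: "conf (fu @ Inl (Sp p i) # fv) pn \<Longrightarrow> fu = [] \<and> fv = []"
  unfolding conf_def by (auto simp: app1 app2)
lemma L_ck: "conf (fu @ Inl (Ck p P' F') # fv) pn \<Longrightarrow> fu = [] \<and> fv = [] \<and> per p - P' \<subseteq> pn \<and> (forb p - F') \<inter> pn = {}"
  unfolding conf_def by (auto simp: app1 app2)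

lemma inv_step:
  assumes G: "random_context_grammar G" and I: "Inv G w" and st: "derive_step (GK G) w w'"
  shows "Inv G w'"
proof -
  from st obtain u v k y Pe Fo where p: "(k, y, Pe, Fo) \<in> PK G" and
    w: "w = u @ [Inl k] @ v" and w': "w' = u @ y @ v" and
    c1: "Pe \<subseteq> alph_N (u @ v)" and c2: "alph_N (u @ v) \<inter> Fo = {}"
    unfolding derive_step_def GK_simps by blast
  from I have D0: "(derive_step G)\<^sup>*\<^sup>* [Inl (start_of G)] (Ex w)"
    and C0: "conf (filter act w) (plN w)"
    unfolding Inv_def by auto
  have D: "(derive_step G)\<^sup>*\<^sup>* [Inl (start_of G)] (Ex u @ exK k @ Ex v)" using D0 w by simp
  have C: "conf (filter act u @ filter act [Inl k] @ filter act v) (plN u \<union> plN (Inl k # v))"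
    using C0 w by (cases "act (Inl k)") simp_all
  have same: "Inv G w'" if "Ex y = exK k" "conf (filter act u @ filter act y @ filter act v) (plN (u @ y @ v))"
    using that D unfolding Inv_def w' by simp
  from p show ?thesis
  proof cases
    case (give X Y)
    then have "filter act u = [] \<and> filter act v = []" using C L_hd by simp
    then show ?thesis using give by (intro same) (auto simp: conf_def)
  next
    case (take X Y)
    have m1: "Inl (Gv X Y) \<in> set (filter act u @ filter act v)" using c1 take mem_act[of "Gv X Y" "u@v"] by simp
    have m2: "Inl (Gt Y X) \<notin> set (filter act u @ filter act v)" using c2 take mem_act[of "Gt Y X" "u@v"] by simp
    have "filter act u @ filter act v = [Inl (Gv X Y)]"
      using C take L_take[OF _ m1 m2] by simp
    then show ?thesis using take by (intro same) (auto simp: conf_def app1')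
  next
    case (rel X Y)
    have m1: "Inl (Gt Y X) \<in> set (filter act u @ filter act v)" using c1 rel mem_act[of "Gt Y X" "u@v"] by simp
    have "filter act u @ filter act v = [Inl (Gt Y X)]"
      using C rel L_rel[OF _ m1] by simp
    then show ?thesis using rel by (intro same) (simp_all add: conf_def)
  next
    case (acq X Y)
    have m2: "Inl (Gv X Y) \<notin> set (filter act u @ filter act v)" using c2 acq mem_act[of "Gv X Y" "u@v"] by simp
    have "filter act u = [] \<and> filter act v = []"
      using C acq L_acq[OF _ m2] by simp
    then show ?thesis using acq by (intro same) (simp_all add: conf_def)
  next
    case (start p)
    then have "filter act u = [] \<and> filter act v = []" using C L_hd by simp
    then show ?thesis using start by (intro same) (simp_all add: conf_def)
  next
    case (pchk p P' F' B)
    have "B \<in> plN (u @ v)" using c1 pchk by (auto simp: alph_N_def plN_def)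
    moreover have "filter act u = [] \<and> filter act v = [] \<and> per p - P' \<subseteq> plN u \<union> plN v \<and> (forb p - F') \<inter> (plN u \<union> plN v) = {}"
      using C pchk L_ck by simp
    ultimately show ?thesis using pchk by (intro same) (auto simp: conf_def)
  next
    case (fchk p P' F' E)
    have "E \<notin> plN (u @ v)" using c2 fchk by (auto simp: alph_N_def plN_def)
    moreover have "filter act u = [] \<and> filter act v = [] \<and> per p - P' \<subseteq> plN u \<union> plN v \<and> (forb p - F') \<inter> (plN u \<union> plN v) = {}"
      using C fchk L_ck by simp
    ultimately show ?thesis using fchk by (intro same) (auto simp: conf_def)
  next
    case (go p)
    have f: "filter act u = []" "filter act v = []" "per p \<subseteq> plN (u @ v)" "forb p \<inter> plN (u @ v) = {}"
      using C go L_ck[of "filter act u" p "{}" "{}" "filter act v"] by auto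
    have al: "alph_N (Ex u @ Ex v) = plN (u @ v)" using alph_Ex[of "u @ v"] f by simp
    obtain A x Pe0 Fo0 where pe: "p = (A, x, Pe0, Fo0)" by (cases p)
    have pp: "(A,x,Pe0,Fo0) \<in> prods_of G" using go pe by simp
    have "derive_step G (Ex u @ [Inl A] @ Ex v) (Ex u @ x @ Ex v)"
      by (rule derive_stepI[OF pp]) (use f al pe in auto)
    moreover have e1: "Ex w = Ex u @ [Inl A] @ Ex v" using w go pe by simp
    moreover have e2: "Ex w' = Ex u @ x @ Ex v" using w' go pe by simp
    ultimately have "(derive_step G)\<^sup>*\<^sup>* [Inl (start_of G)] (Ex w')"
      using D0 by (metis rtranclp.rtrancl_into_rtrancl)
    moreover have "conf (filter act w') (plN w')" using go f w' by simp
    ultimately show ?thesis unfolding Inv_def by simp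
  next
    case (split p i)
    have "drop i (rhs p) = rhs p ! i # drop (Suc i) (rhs p)" using split by (simp add: Cons_nth_drop_Suc)
    moreover have "filter act u = [] \<and> filter act v = []" using C split L_sp by simp
    ultimately show ?thesis using split by (intro same) simp_all
  next
    case (last p i)
    have "drop i (rhs p) = [rhs p ! i]" using last
      by (metis Cons_nth_drop_Suc drop_all le_refl lessI)
    moreover have "filter act u = [] \<and> filter act v = []" using C last L_sp by simp
    ultimately show ?thesis using last by (intro same) simp_all
  next
    case (ht a)
    then have "filter act u = [] \<and> filter act v = []" using C L_hd by simp
    then show ?thesis using ht by (intro same) simp_all
  next
    case (pt a)
    then show ?thesis using C by (intro same) simp_all
  qed
qed

lemma sound:
  assumes G: "random_context_grammar G"
  shows "Lang (GK G) \<subseteq> Lang G"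
proof
  fix t assume "t \<in> Lang (GK G)"
  then have t: "set t \<subseteq> tms_of G" and d: "(derive_step (GK G))\<^sup>*\<^sup>* [Inl (Hd (Inl (start_of G)))] (map Inr t)"
    unfolding Lang_def by auto
  have "Inv G [Inl (Hd (Inl (start_of G)))]" by (simp add: Inv_def conf_def)
  with d have "Inv G (map Inr t)"
    by induction (auto intro: inv_step[OF G])
  then have "(derive_step G)\<^sup>*\<^sup>* [Inl (start_of G)] (Ex (map Inr t))" unfolding Inv_def by blast
  moreover have "Ex (map Inr t) = map Inr t" by (induction t) auto
  ultimately have "(derive_step G)\<^sup>*\<^sup>* [Inl (start_of G)] (map Inr t)" by metis
  then show "t \<in> Lang G" using t unfolding Lang_def by blast
qed



definition cfg :: "('n,'t) sym list \<Rightarrow> ('n,'t) sym \<Rightarrow> ('n,'t) sym list \<Rightarrow> (('n,'t) K, 't) sym list" where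
  "cfg a X b = map (\<lambda>Z. Inl (Pl Z)) a @ [Inl (Hd X)] @ map (\<lambda>Z. Inl (Pl Z)) b"

lemma alph_PL[simp]: "alph_N (map (\<lambda>Z. Inl (Pl Z)) a) = Pl ` set a"
  by (induction a) auto

lemma stepK:
  "(k, y, Pe, Fo) \<in> PK G \<Longrightarrow> Pe \<subseteq> alph_N (u @ v) \<Longrightarrow> alph_N (u @ v) \<inter> Fo = {} \<Longrightarrow>
   s = u @ [Inl k] @ v \<Longrightarrow> s' = u @ y @ v \<Longrightarrow> derive_step (GK G) s s'"
  using derive_stepI[of k y Pe Fo "GK G" u v] by simp

lemma adjR:
  assumes hX: "X \<in> syms_of G" and hY: "Y \<in> syms_of G"
  shows "(derive_step (GK G))\<^sup>*\<^sup>* (cfg a X (Y # b)) (cfg (a @ [X]) Y b)"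
proof -
  let ?Ma = "map (\<lambda>Z. Inl (Pl Z)) a" and ?Mb = "map (\<lambda>Z. Inl (Pl Z)) b"
  have 1: "derive_step (GK G) (?Ma @ [Inl (Hd X)] @ Inl (Pl Y) # ?Mb) (?Ma @ [Inl (Gv X Y)] @ Inl (Pl Y) # ?Mb)"
    by (rule stepK[OF PK.give[OF hX hY], where u = ?Ma and v = "Inl (Pl Y) # ?Mb"]) auto
  have 2: "derive_step (GK G) (?Ma @ [Inl (Gv X Y)] @ Inl (Pl Y) # ?Mb) (?Ma @ [Inl (Gv X Y)] @ Inl (Gt Y X) # ?Mb)"
    by (rule stepK[OF PK.take[OF hX hY], where u = "?Ma @ [Inl (Gv X Y)]" and v = ?Mb]) auto
  have 3: "derive_step (GK G) (?Ma @ [Inl (Gv X Y)] @ Inl (Gt Y X) # ?Mb) (?Ma @ [Inl (Pl X)] @ Inl (Gt Y X) # ?Mb)"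
    by (rule stepK[OF PK.rel[OF hX hY], where u = ?Ma and v = "Inl (Gt Y X) # ?Mb"]) auto
  have 4: "derive_step (GK G) (?Ma @ [Inl (Pl X)] @ Inl (Gt Y X) # ?Mb) (?Ma @ [Inl (Pl X)] @ Inl (Hd Y) # ?Mb)"
    by (rule stepK[OF PK.acq[OF hX hY], where u = "?Ma @ [Inl (Pl X)]" and v = ?Mb]) auto
  from 1 2 3 4 show ?thesis unfolding cfg_def
    by (simp add: converse_rtranclp_into_rtranclp)
qed

lemma adjL:
  assumes hX: "X \<in> syms_of G" and hY: "Y \<in> syms_of G"
  shows "(derive_step (GK G))\<^sup>*\<^sup>* (cfg (a @ [Y]) X b) (cfg a Y (X # b))"
proof -
  let ?Ma = "map (\<lambda>Z. Inl (Pl Z)) a" and ?Mb = "map (\<lambda>Z. Inl (Pl Z)) b"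
  have 1: "derive_step (GK G) (?Ma @ [Inl (Pl Y)] @ Inl (Hd X) # ?Mb) (?Ma @ [Inl (Pl Y)] @ Inl (Gv X Y) # ?Mb)"
    by (rule stepK[OF PK.give[OF hX hY], where u = "?Ma @ [Inl (Pl Y)]" and v = ?Mb]) auto
  have 2: "derive_step (GK G) (?Ma @ [Inl (Pl Y)] @ Inl (Gv X Y) # ?Mb) (?Ma @ [Inl (Gt Y X)] @ Inl (Gv X Y) # ?Mb)"
    by (rule stepK[OF PK.take[OF hX hY], where u = ?Ma and v = "Inl (Gv X Y) # ?Mb"]) auto
  have 3: "derive_step (GK G) (?Ma @ [Inl (Gt Y X)] @ Inl (Gv X Y) # ?Mb) (?Ma @ [Inl (Gt Y X)] @ Inl (Pl X) # ?Mb)"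
    by (rule stepK[OF PK.rel[OF hX hY], where u = "?Ma @ [Inl (Gt Y X)]" and v = ?Mb]) auto
  have 4: "derive_step (GK G) (?Ma @ [Inl (Gt Y X)] @ Inl (Pl X) # ?Mb) (?Ma @ [Inl (Hd Y)] @ Inl (Pl X) # ?Mb)"
    by (rule stepK[OF PK.acq[OF hX hY], where u = ?Ma and v = "Inl (Pl X) # ?Mb"]) auto
  from 1 2 3 4 show ?thesis unfolding cfg_def
    by (simp add: converse_rtranclp_into_rtranclp)
qed

lemma moveR:
  "set (a @ [X] @ c @ [Y] @ b) \<subseteq> syms_of G \<Longrightarrow>
   (derive_step (GK G))\<^sup>*\<^sup>* (cfg a X (c @ [Y] @ b)) (cfg (a @ [X] @ c) Y b)"
proof (induction c arbitrary: a X)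
  case Nil then show ?case using adjR[of X G Y a b] by simp
next
  case (Cons Z c)
  have "(derive_step (GK G))\<^sup>*\<^sup>* (cfg a X (Z # c @ [Y] @ b)) (cfg (a @ [X]) Z (c @ [Y] @ b))"
    using adjR[of X G Z a "c @ [Y] @ b"] Cons.prems by simp
  moreover have "(derive_step (GK G))\<^sup>*\<^sup>* (cfg (a @ [X]) Z (c @ [Y] @ b)) (cfg ((a @ [X]) @ [Z] @ c) Y b)"
    using Cons.IH[of "a @ [X]" Z] Cons.prems by simp
  ultimately show ?case by simp
qed

lemma moveL:
  "set (a @ [Y] @ c @ [X] @ b) \<subseteq> syms_of G \<Longrightarrow>
   (derive_step (GK G))\<^sup>*\<^sup>* (cfg (a @ [Y] @ c) X b) (cfg a Y (c @ [X] @ b))"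
proof (induction c arbitrary: X b rule: rev_induct)
  case Nil then show ?case using adjL[of X G Y a b] by simp
next
  case (snoc Z c)
  have "(derive_step (GK G))\<^sup>*\<^sup>* (cfg ((a @ [Y] @ c) @ [Z]) X b) (cfg (a @ [Y] @ c) Z (X # b))"
    using adjL[of X G Z "a @ [Y] @ c" b] snoc.prems by simp
  moreover have "(derive_step (GK G))\<^sup>*\<^sup>* (cfg (a @ [Y] @ c) Z (X # b)) (cfg a Y (c @ [Z] @ X # b))"
    using snoc.IH[of Z "X # b"] snoc.prems by simp
  ultimately show ?case by simp
qed

lemma split_lt: "length a < length a' \<Longrightarrow> a @ X # b = a' @ X' # b' \<Longrightarrow> \<exists>c. a' = a @ X # c \<and> b = c @ X' # b'"
  by (auto simp: append_eq_append_conv2 Cons_eq_append_conv)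

lemma move:
  assumes e: "a @ [X] @ b = a' @ [X'] @ b'" and s: "set (a @ [X] @ b) \<subseteq> syms_of G"
  shows "(derive_step (GK G))\<^sup>*\<^sup>* (cfg a X b) (cfg a' X' b')"
proof (cases "length a" "length a'" rule: linorder_cases)
  case less
  then obtain c where c: "a' = a @ X # c" "b = c @ X' # b'" using split_lt e by fastforce
  show ?thesis using moveR[of a X c X' b' G] s c by simp
next
  case equal
  then show ?thesis using e by simp
next
  case greater
  then obtain c where c: "a = a' @ X' # c" "b' = c @ X # b" using split_lt[of a' a X' b' X b] e by fastforce
  show ?thesis using moveL[of a' X' c X b G] s c by simp
qed



abbreviation PLs :: "('n,'t) sym list \<Rightarrow> (('n,'t) K, 't) sym list" where
  "PLs a \<equiv> map (\<lambda>Z. Inl (Pl Z)) a"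

lemma pchk_many:
  assumes pP: "p \<in> prods_of G" and fin: "finite P'"
  shows "P' \<subseteq> per p \<Longrightarrow> P' \<subseteq> alph_N (u @ v) \<Longrightarrow> F' \<subseteq> forb p \<Longrightarrow>
    (derive_step (GK G))\<^sup>*\<^sup>* (PLs u @ [Inl (Ck p P' F')] @ PLs v) (PLs u @ [Inl (Ck p {} F')] @ PLs v)"
  using fin
proof (induction P' rule: finite_induct)
  case empty then show ?case by simp
next
  case (insert B P'')
  have B: "Pl (Inl B) \<in> alph_N (PLs u @ PLs v)" using insert.prems
    by (auto simp: alph_N_def)
  have "derive_step (GK G) (PLs u @ [Inl (Ck p (insert B P'') F')] @ PLs v) (PLs u @ [Inl (Ck p P'' F')] @ PLs v)"
    by (rule stepK[OF PK.pchk[OF pP, of "insert B P''" F' B], where u = "PLs u" and v = "PLs v"])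
      (use insert B in auto)
  moreover have "(derive_step (GK G))\<^sup>*\<^sup>* (PLs u @ [Inl (Ck p P'' F')] @ PLs v) (PLs u @ [Inl (Ck p {} F')] @ PLs v)"
    using insert by auto
  ultimately show ?case by (rule converse_rtranclp_into_rtranclp)
qed

lemma fchk_many:
  assumes pP: "p \<in> prods_of G" and fin: "finite F'"
  shows "F' \<subseteq> forb p \<Longrightarrow> F' \<inter> alph_N (u @ v) = {} \<Longrightarrow>
    (derive_step (GK G))\<^sup>*\<^sup>* (PLs u @ [Inl (Ck p {} F')] @ PLs v) (PLs u @ [Inl (Ck p {} {})] @ PLs v)"
  using fin
proof (induction F' rule: finite_induct)
  case empty then show ?case by simp
next
  case (insert C F'')
  have C: "Pl (Inl C) \<notin> alph_N (PLs u @ PLs v)" using insert.prems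
    by (auto simp: alph_N_def)
  have "derive_step (GK G) (PLs u @ [Inl (Ck p {} (insert C F''))] @ PLs v) (PLs u @ [Inl (Ck p {} F'')] @ PLs v)"
    by (rule stepK[OF PK.fchk[OF pP, of "{}" "insert C F''" C], where u = "PLs u" and v = "PLs v"])
      (use insert C in auto)
  moreover have "(derive_step (GK G))\<^sup>*\<^sup>* (PLs u @ [Inl (Ck p {} F'')] @ PLs v) (PLs u @ [Inl (Ck p {} {})] @ PLs v)"
    using insert by auto
  ultimately show ?case by (rule converse_rtranclp_into_rtranclp)
qed

lemma split_many:
  assumes pP: "p \<in> prods_of G" and x: "rhs p = x"
  shows "i < length x \<Longrightarrow> (derive_step (GK G))\<^sup>*\<^sup>* (PLs u @ PLs (take i x) @ [Inl (Sp p i)] @ PLs v)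
     (PLs u @ PLs (butlast x) @ [Inl (Hd (last x))] @ PLs v)"
proof (induction "length x - Suc i" arbitrary: i)
  case 0
  then have i: "Suc i = length x" by simp
  have "take i x = butlast x" using i by (metis butlast_conv_take diff_Suc_1)
  moreover have "x ! i = last x" using i by (metis diff_Suc_1 last_conv_nth list.size(3) nat.distinct(1))
  ultimately have "derive_step (GK G) (PLs u @ PLs (take i x) @ [Inl (Sp p i)] @ PLs v)
     (PLs u @ PLs (butlast x) @ [Inl (Hd (last x))] @ PLs v)"
    using i x by (intro stepK[OF PK.last[OF pP, of i], where u = "PLs u @ PLs (take i x)" and v = "PLs v"]) auto
  then show ?case by simp
next
  case (Suc n)
  then have i: "Suc i < length x" by simp
  have "derive_step (GK G) (PLs u @ PLs (take i x) @ [Inl (Sp p i)] @ PLs v)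
     (PLs u @ PLs (take (Suc i) x) @ [Inl (Sp p (Suc i))] @ PLs v)"
    using i x by (intro stepK[OF PK.split[OF pP, of i], where u = "PLs u @ PLs (take i x)" and v = "PLs v"])
      (auto simp: take_Suc_conv_app_nth)
  moreover have "(derive_step (GK G))\<^sup>*\<^sup>* (PLs u @ PLs (take (Suc i) x) @ [Inl (Sp p (Suc i))] @ PLs v)
     (PLs u @ PLs (butlast x) @ [Inl (Hd (last x))] @ PLs v)"
    using Suc i by auto
  ultimately show ?case by (rule converse_rtranclp_into_rtranclp)
qed

lemma sim:
  assumes G: "random_context_grammar G" and pP: "(A, x, Pe, Fo) \<in> prods_of G"
    and c1: "Pe \<subseteq> alph_N (u @ v)" and c2: "alph_N (u @ v) \<inter> Fo = {}"
  shows "(derive_step (GK G))\<^sup>*\<^sup>* (cfg u (Inl A) v) (cfg (u @ butlast x) (last x) v)"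
proof -
  let ?p = "(A, x, Pe, Fo)"
  have props: "A \<in> nts_of G \<and> x \<noteq> [] \<and> set x \<subseteq> syms_of G \<and> Pe \<subseteq> nts_of G \<and> Fo \<subseteq> nts_of G"
    using rcg_prod[OF G pP] .
  have fN: "finite (nts_of G)" using G by (simp add: random_context_grammar_def)
  have fin: "finite Pe" "finite Fo" using props fN finite_subset by blast+
  have s1: "derive_step (GK G) (cfg u (Inl A) v) (PLs u @ [Inl (Ck ?p Pe Fo)] @ PLs v)"
    by (rule stepK[OF PK.start[OF pP], where u = "PLs u" and v = "PLs v"]) (auto simp: cfg_def)
  have s2: "(derive_step (GK G))\<^sup>*\<^sup>* (PLs u @ [Inl (Ck ?p Pe Fo)] @ PLs v) (PLs u @ [Inl (Ck ?p {} Fo)] @ PLs v)"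
    using pchk_many[OF pP fin(1), of u v Fo] c1 by simp
  have s3: "(derive_step (GK G))\<^sup>*\<^sup>* (PLs u @ [Inl (Ck ?p {} Fo)] @ PLs v) (PLs u @ [Inl (Ck ?p {} {})] @ PLs v)"
    using fchk_many[OF pP fin(2), of u v] c2 by auto
  have s4: "derive_step (GK G) (PLs u @ [Inl (Ck ?p {} {})] @ PLs v) (PLs u @ [Inl (Sp ?p 0)] @ PLs v)"
    by (rule stepK[OF PK.go[OF pP], where u = "PLs u" and v = "PLs v"]) auto
  have s5: "(derive_step (GK G))\<^sup>*\<^sup>* (PLs u @ PLs (take 0 x) @ [Inl (Sp ?p 0)] @ PLs v)
     (PLs u @ PLs (butlast x) @ [Inl (Hd (last x))] @ PLs v)"
    using split_many[OF pP, of x 0 u v] props by simp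
  have "(derive_step (GK G))\<^sup>*\<^sup>* (cfg u (Inl A) v) (PLs u @ PLs (butlast x) @ [Inl (Hd (last x))] @ PLs v)"
    using s1 s2 s3 s4 s5
    by (simp del: map_append)
  then show ?thesis by (simp add: cfg_def)
qed

lemma term_many:
  "set s \<subseteq> tms_of G \<Longrightarrow> (derive_step (GK G))\<^sup>*\<^sup>* (pre @ PLs (map Inr s) @ post) (pre @ map Inr s @ post)"
proof (induction s arbitrary: pre)
  case Nil then show ?case by simp
next
  case (Cons d s)
  have "derive_step (GK G) (pre @ PLs (map Inr (d # s)) @ post) ((pre @ [Inr d]) @ PLs (map Inr s) @ post)"
    by (rule stepK[OF PK.pt, where u = pre and v = "PLs (map Inr s) @ post"]) (use Cons.prems in auto)
  moreover have "(derive_step (GK G))\<^sup>*\<^sup>* ((pre @ [Inr d]) @ PLs (map Inr s) @ post) ((pre @ [Inr d]) @ map Inr s @ post)"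
    using Cons.IH[of "pre @ [Inr d]"] Cons.prems by simp
  ultimately show ?case by (simp add: converse_rtranclp_into_rtranclp)
qed

lemma reach:
  assumes G: "random_context_grammar G" and d: "(derive_step G)\<^sup>*\<^sup>* [Inl (start_of G)] w"
  shows "\<exists>a X b. w = a @ [X] @ b \<and> (derive_step (GK G))\<^sup>*\<^sup>* [Inl (Hd (Inl (start_of G)))] (cfg a X b)"
  using d
proof induction
  case base then show ?case by (intro exI[of _ "[]"] exI[of _ "Inl (start_of G)"]) (simp add: cfg_def)
next
  case (step w w')
  then obtain a X b where ab: "w = a @ [X] @ b" "(derive_step (GK G))\<^sup>*\<^sup>* [Inl (Hd (Inl (start_of G)))] (cfg a X b)"
    by blast
  have ws: "set w \<subseteq> syms_of G"
    using derives_syms[OF G step.hyps(1)] G by (simp add: random_context_grammar_def syms_of_def)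
  from step.hyps(2) obtain u v A x Pe Fo where p: "(A, x, Pe, Fo) \<in> prods_of G" and
    w: "w = u @ [Inl A] @ v" and w': "w' = u @ x @ v" and
    c1: "Pe \<subseteq> alph_N (u @ v)" and c2: "alph_N (u @ v) \<inter> Fo = {}"
    unfolding derive_step_def by blast
  have xne: "x \<noteq> []" using rcg_prod[OF G p] by simp
  have "(derive_step (GK G))\<^sup>*\<^sup>* (cfg a X b) (cfg u (Inl A) v)"
    by (rule move) (use ab w ws in auto)
  moreover have "(derive_step (GK G))\<^sup>*\<^sup>* (cfg u (Inl A) v) (cfg (u @ butlast x) (last x) v)"
    using sim[OF G p c1 c2] .
  moreover have "w' = (u @ butlast x) @ [last x] @ v" using w' xne by simp
  ultimately show ?case using ab(2)
    by (intro exI[of _ "u @ butlast x"] exI[of _ "last x"] exI[of _ v]) (meson rtranclp_trans)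
qed

lemma complete:
  assumes G: "random_context_grammar G"
  shows "Lang G \<subseteq> Lang (GK G)"
proof
  fix t assume "t \<in> Lang G"
  then have t: "set t \<subseteq> tms_of G" and d: "(derive_step G)\<^sup>*\<^sup>* [Inl (start_of G)] (map Inr t)"
    unfolding Lang_def by auto
  from reach[OF G d] obtain a X b where e: "map Inr t = a @ [X] @ b"
    and r: "(derive_step (GK G))\<^sup>*\<^sup>* [Inl (Hd (Inl (start_of G)))] (cfg a X b)" by blast
  from e obtain ta c tb where tt: "t = ta @ c # tb" "a = map Inr ta" "X = Inr c" "b = map Inr tb"
    by (auto simp: map_eq_append_conv)
  have ct: "c \<in> tms_of G" "set ta \<subseteq> tms_of G" "set tb \<subseteq> tms_of G" using t tt by auto
  have "(derive_step (GK G))\<^sup>*\<^sup>* (cfg a X b) ([] @ PLs (map Inr ta) @ [Inl (Hd (Inr c))] @ PLs (map Inr tb))"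
    using tt by (simp add: cfg_def)
  also have "(derive_step (GK G))\<^sup>*\<^sup>* \<dots> (map Inr ta @ [Inl (Hd (Inr c))] @ PLs (map Inr tb))"
    using term_many[OF ct(2), of "[]" "[Inl (Hd (Inr c))] @ PLs (map Inr tb)"] by simp
  also have "(derive_step (GK G))\<^sup>*\<^sup>* \<dots> ((map Inr ta @ [Inr c]) @ PLs (map Inr tb) @ [])"
    by (rule r_into_rtranclp, rule stepK[OF PK.ht[OF ct(1)], where u = "map Inr ta" and v = "PLs (map Inr tb)"]) auto
  also have "(derive_step (GK G))\<^sup>*\<^sup>* \<dots> ((map Inr ta @ [Inr c]) @ map Inr tb @ [])"
    using term_many[OF ct(3)] by blast
  finally have "(derive_step (GK G))\<^sup>*\<^sup>* [Inl (Hd (Inl (start_of G)))] (map Inr t)"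
    using r tt by (simp add: rtranclp_trans)
  then show "t \<in> Lang (GK G)" using t unfolding Lang_def by simp
qed


theorem corollary4:
  fixes G :: "('n, 't) rcg"
  assumes "random_context_grammar G"
  shows "\<exists>G' :: ('n + nat, 't) rcg.
           random_context_grammar G' \<and> limited G' \<and> Lang G' = Lang G"
proof -
  have fin: "finite (ntsK G)" using GK_rcg[OF assms] by (simp add: random_context_grammar_def)
  obtain f :: "('n,'t) K \<Rightarrow> nat" and n where "f ` ntsK G = {i. i < n}" and inj: "inj_on f (ntsK G)"
    using finite_imp_inj_to_nat_seg[OF fin] by blast
  define g :: "('n,'t) K \<Rightarrow> 'n + nat" where "g = (\<lambda>k. Inr (f k))"
  have ig: "inj_on g (nts_of (GK G))" using inj unfolding g_def inj_on_def by simp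
  have "random_context_grammar (ren g (GK G))" using ren_rcg[OF GK_rcg[OF assms]] .
  moreover have "limited (ren g (GK G))" using ren_limited[OF GK_limited] .
  moreover have "Lang (ren g (GK G)) = Lang G"
    using ren_Lang[OF GK_rcg[OF assms] ig] sound[OF assms] complete[OF assms] by simp
  ultimately show ?thesis by blast
qed

end
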